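(* Let $(x^k,z^k)\in\operatorname{conv}(X)\times Z$ satisfy the $z$-optimality condition $z^k\in\arg\min_{z\in Z}\|Qx^k-z\|_2$. Then for every $\omega\in Z^\perp$, $$\widehat{\phi}(\omega,x^k,z^k)\ \ge\ \phi^C\big(\omega+\rho(Qx^k-z^k)\big).$$
   Context: Standing setup: $f:\mathbb{R}^n\to\mathbb{R}$ is convex and continuously differentiable; $Q\in\mathbb{R}^{q\times n}$; $X\subset\mathbb{R}^n$ is nonempty and compact (not necessarily convex) and $\operatorname{conv}(X)$ denotes its convex hull; $Z\subseteq\mathbb{R}^q$ is a linear subspace and $Z^\perp=\{v\in\mathbb{R}^q: v^\top z=0\ \forall z\in Z\}$; $\rho>0$ is fixed. Define $\phi^C(\omega)=\min\{f(x)+\omega^\top Qx : x\in\operatorname{conv}(X)\}$, the augmented Lagrangian $L_\rho(x,z,\omega)=f(x)+\omega^\top Qx+\frac{\rho}{2}\|Qx-z\|_2^2$, and $\widehat{\phi}(\omega,x,z)=L_\rho(x,z,\omega)+\frac{\rho}{2}\|Qx-z\|_2^2$. *)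

theory Defs
  imports "HOL-Analysis.Analysis"
begin

text \<open>phi^C(w) = min { f x + w^T Q x : x in conv X }  (minimum exists since conv X is compact
  and the objective is continuous; written as Inf of the image).\<close>
definition phiC :: "(real^'n \<Rightarrow> real) \<Rightarrow> real^'n^'q \<Rightarrow> (real^'n) set \<Rightarrow> real^'q \<Rightarrow> real" where
  "phiC f Q X \<omega> = Inf ((\<lambda>x. f x + \<omega> \<bullet> (Q *v x)) ` (convex hull X))"

definition L_rho :: "(real^'n \<Rightarrow> real) \<Rightarrow> real^'n^'q \<Rightarrow> real \<Rightarrow> real^'n \<Rightarrow> real^'q \<Rightarrow> real^'q \<Rightarrow> real" where
  "L_rho f Q \<rho> x z \<omega> = f x + \<omega> \<bullet> (Q *v x) + \<rho> / 2 * (norm (Q *v x - z))\<^sup>2"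

definition phi_hat :: "(real^'n \<Rightarrow> real) \<Rightarrow> real^'n^'q \<Rightarrow> real \<Rightarrow> real^'q \<Rightarrow> real^'n \<Rightarrow> real^'q \<Rightarrow> real" where
  "phi_hat f Q \<rho> \<omega> x z = L_rho f Q \<rho> x z \<omega> + \<rho> / 2 * (norm (Q *v x - z))\<^sup>2"

end

theory Submission
  imports Defs
begin

theorem lemma2:
  fixes f :: "real^'n \<Rightarrow> real" and Q :: "real^'n^'q"
    and X :: "(real^'n) set" and Z :: "(real^'q) set" and \<rho> :: real
    and xk :: "real^'n" and zk :: "real^'q" and \<omega> :: "real^'q"
  assumes f_convex: "convex_on UNIV f"
    and f_C1: "\<exists>g. (\<forall>x. (f has_derivative (\<lambda>h. g x \<bullet> h)) (at x)) \<and> continuous_on UNIV g"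
    and X_ne: "X \<noteq> {}" and X_compact: "compact X"
    and Z_sub: "subspace Z"
    and rho_pos: "\<rho> > 0"
    and xk_in: "xk \<in> convex hull X"
    and zk_in: "zk \<in> Z"
    and zk_opt: "\<forall>z\<in>Z. norm (Q *v xk - zk) \<le> norm (Q *v xk - z)"
    and \<omega>_in: "\<omega> \<in> orthogonal_comp Z"
  shows "phi_hat f Q \<rho> \<omega> xk zk \<ge> phiC f Q X (\<omega> + \<rho> *\<^sub>R (Q *v xk - zk))"
proof -
  define r where "r = Q *v xk - zk"
  have orth: "r \<bullet> zk = 0"
  proof (cases "zk = 0")
    case True then show ?thesis by simp
  next
    case False
    define a where "a = r \<bullet> zk"
    define b where "b = zk \<bullet> zk"
    have bpos: "b > 0" using False by (simp add: b_def)
    define t where "t = a / b"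
    have "zk + t *\<^sub>R zk \<in> Z" using Z_sub zk_in
      by (simp add: subspace_add subspace_scale)
    hence "norm r \<le> norm (r - t *\<^sub>R zk)" using zk_opt unfolding r_def
      by (metis diff_diff_eq)
    hence "(norm r)\<^sup>2 \<le> (norm (r - t *\<^sub>R zk))\<^sup>2" by (simp add: power_mono)
    hence "r \<bullet> r \<le> (r - t *\<^sub>R zk) \<bullet> (r - t *\<^sub>R zk)" by (simp add: power2_norm_eq_inner)
    hence "0 \<le> t * t * b - 2 * t * a"
      by (simp add: inner_diff_left inner_diff_right a_def b_def inner_commute algebra_simps)
    hence "0 \<le> - (a * a) / b" using bpos by (simp add: t_def field_simps power2_eq_square)
    hence "a * a \<le> 0" using bpos by (simp add: field_simps)
    hence "a = 0" by (metis mult_eq_0_iff not_square_less_zero le_less)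
    thus ?thesis unfolding a_def .
  qed
  obtain g where g: "\<forall>x. (f has_derivative (\<lambda>h. g x \<bullet> h)) (at x)" using f_C1 by blast
  have fc: "continuous_on UNIV f"
    using g by (meson continuous_at_imp_continuous_on has_derivative_continuous)
  define w where "w = \<omega> + \<rho> *\<^sub>R r"
  have cont: "continuous_on (convex hull X) (\<lambda>x. f x + w \<bullet> (Q *v x))"
    by (intro continuous_intros continuous_on_subset[OF fc]) (auto intro: linear_continuous_on bounded_linear_compose)
  have "compact (convex hull X)" using X_compact by (simp add: compact_convex_hull)
  hence "compact ((\<lambda>x. f x + w \<bullet> (Q *v x)) ` (convex hull X))" using cont compact_continuous_image by blast
  hence bdd: "bdd_below ((\<lambda>x. f x + w \<bullet> (Q *v x)) ` (convex hull X))"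
    by (simp add: bounded_imp_bdd_below compact_imp_bounded)
  have "phiC f Q X w \<le> f xk + w \<bullet> (Q *v xk)"
    unfolding phiC_def by (rule cInf_lower[OF _ bdd]) (use xk_in in auto)
  also have "\<dots> = f xk + \<omega> \<bullet> (Q *v xk) + \<rho> * (r \<bullet> (Q *v xk))"
    by (simp add: w_def inner_add_left)
  also have "r \<bullet> (Q *v xk) = r \<bullet> r" using orth unfolding r_def
    by (simp add: inner_diff_right inner_diff_left inner_commute)
  also have "f xk + \<omega> \<bullet> (Q *v xk) + \<rho> * (r \<bullet> r) = phi_hat f Q \<rho> \<omega> xk zk"
    by (simp add: phi_hat_def L_rho_def r_def power2_norm_eq_inner)
  finally show ?thesis by (simp add: w_def r_def)
qed

end
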